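(* Let $\omega\in\mathbb R\setminus\mathbb Z$ and let $(q^n)$ be a sequence in $\Lambda$ such that every component satisfies $\int_0^{2\pi}z^n_i(t)\,dt=0$ for all $i\in\mathbf N$ and all $n$. If $\|q^n\|_{H^1(\mathbb R/2\pi\mathbb Z)}\to\infty$, then $\mathcal A_\omega(q^n;2\pi)\to\infty$.
   Context: Fix $N\ge2$ and $\mathbf N=\{0,\dots,N-1\}$. Positions are $q_i=(x_i,y_i,z_i)=(\zeta_i,z_i)$ with $\zeta_i=x_i+\mathrm iy_i$. - Loop space: $\Lambda=H^1(\mathbb R/2\pi\mathbb Z,\mathbb R^{3N})$. - Potential: $U(q)=\sum_{i<j}1/|q_i-q_j|$ (taken as $+\infty$ at collisions). - Rotating-frame action: $\mathcal A_\omega(q;T)=\int_0^T\big(\tfrac12\sum_i(|\dot\zeta_i+\mathrm i\omega\zeta_i|^2+\dot z_i^2)+U(q)\big)dt$. *)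

theory Defs
  imports "HOL-Analysis.Analysis"
begin

text \<open>A loop q in Lambda is encoded coordinate-wise: q i k t is the k-th coordinate
  (k = 0,1,2 for x,y,z) of body i at time t; dq i k is its weak derivative.\<close>

definition H1per :: "(real \<Rightarrow> real) \<Rightarrow> (real \<Rightarrow> real) \<Rightarrow> bool" where
  "H1per f g \<longleftrightarrow> (\<forall>t. f (t + 2*pi) = f t) \<and> (\<forall>t. g (t + 2*pi) = g t) \<and>
     g \<in> borel_measurable borel \<and>
     set_integrable lborel {0..2*pi} (\<lambda>t. (g t)^2) \<and>
     (\<forall>t. f t = f 0 + (LBINT s=0..t. g s))"

definition in_Lambda :: "nat \<Rightarrow> (nat \<Rightarrow> nat \<Rightarrow> real \<Rightarrow> real) \<Rightarrow> (nat \<Rightarrow> nat \<Rightarrow> real \<Rightarrow> real) \<Rightarrow> bool" where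
  "in_Lambda N q dq \<longleftrightarrow> (\<forall>i<N. \<forall>k<3. H1per (q i k) (dq i k))"

definition H1norm :: "nat \<Rightarrow> (nat \<Rightarrow> nat \<Rightarrow> real \<Rightarrow> real) \<Rightarrow> (nat \<Rightarrow> nat \<Rightarrow> real \<Rightarrow> real) \<Rightarrow> real" where
  "H1norm N q dq = sqrt (\<Sum>i<N. \<Sum>k<3. (LBINT t=0..2*pi. (q i k t)^2 + (dq i k t)^2))"

definition dist3 :: "(nat \<Rightarrow> nat \<Rightarrow> real \<Rightarrow> real) \<Rightarrow> nat \<Rightarrow> nat \<Rightarrow> real \<Rightarrow> real" where
  "dist3 q i j t = sqrt (\<Sum>k<3. (q i k t - q j k t)^2)"

definition potential :: "nat \<Rightarrow> (nat \<Rightarrow> nat \<Rightarrow> real \<Rightarrow> real) \<Rightarrow> real \<Rightarrow> ennreal" where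
  "potential N q t =
     (if \<exists>i<N. \<exists>j<N. i < j \<and> dist3 q i j t = 0 then top
      else ennreal (\<Sum>i<N. \<Sum>j\<in>{i<..<N}. 1 / dist3 q i j t))"

definition kinetic :: "real \<Rightarrow> nat \<Rightarrow> (nat \<Rightarrow> nat \<Rightarrow> real \<Rightarrow> real) \<Rightarrow> (nat \<Rightarrow> nat \<Rightarrow> real \<Rightarrow> real) \<Rightarrow> real \<Rightarrow> real" where
  "kinetic \<omega> N q dq t = (1/2) * (\<Sum>i<N.
      (cmod (Complex (dq i 0 t) (dq i 1 t) + \<i> * complex_of_real \<omega> * Complex (q i 0 t) (q i 1 t)))^2
      + (dq i 2 t)^2)"

definition action :: "real \<Rightarrow> nat \<Rightarrow> (nat \<Rightarrow> nat \<Rightarrow> real \<Rightarrow> real) \<Rightarrow> (nat \<Rightarrow> nat \<Rightarrow> real \<Rightarrow> real) \<Rightarrow> real \<Rightarrow> ennreal" where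
  "action \<omega> N q dq T =
     (\<integral>\<^sup>+ t. (ennreal (kinetic \<omega> N q dq t) + potential N q t) * indicator {0..T} t \<partial>lborel)"

end

theory Submission
  imports Defs "HOL-Probability.Probability_Mass_Function"
begin



lemma set_int_of_sq:
  fixes g :: "real \<Rightarrow> real"
  assumes "g \<in> borel_measurable borel" "set_integrable lborel {a..b} (\<lambda>t. (g t)^2)"
  shows "set_integrable lborel {a..b} g"
proof -
  have c: "set_integrable lborel {a..b} (\<lambda>t. 1 + (g t)^2)"
    using assms(2) by (intro set_integral_add) (auto intro: borel_integrable_atLeastAtMost' continuous_on_const)
  show ?thesis
  proof (rule set_integrable_bound[OF c])
    show "set_borel_measurable lborel {a..b} g" using assms(1) unfolding set_borel_measurable_def
      by measurable
    show "AE x in lborel. x \<in> {a..b} \<longrightarrow> norm (g x) \<le> norm (1 + (g x)\<^sup>2)"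
    proof (intro AE_I2 impI)
      fix x
      have "\<bar>g x\<bar> \<le> 1 + (g x)^2"
      proof -
        have "0 \<le> (\<bar>g x\<bar> - 1)^2" by simp
        also have "\<dots> = (g x)^2 - 2 * \<bar>g x\<bar> + 1" by (simp add: power2_diff)
        finally show ?thesis by (smt (verit) zero_le_power2)
      qed
      then show "norm (g x) \<le> norm (1 + (g x)\<^sup>2)" by simp
    qed
  qed
qed

lemma H1per_facts:
  assumes H: "H1per f g"
  shows "g \<in> borel_measurable borel"
    and "set_integrable lborel {0..2*pi} g"
    and "set_integrable lborel {0..2*pi} (\<lambda>t. (g t)^2)"
    and "\<And>t. t \<in> {0..2*pi} \<Longrightarrow> f t = f 0 + (LBINT s:{0..t}. g s)"
    and "continuous_on {0..2*pi} f"
    and "f (2*pi) = f 0"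
proof -
  show gm: "g \<in> borel_measurable borel" using H unfolding H1per_def by auto
  show g2: "set_integrable lborel {0..2*pi} (\<lambda>t. (g t)^2)" using H unfolding H1per_def by auto
  show gi: "set_integrable lborel {0..2*pi} g" by (rule set_int_of_sq[OF gm g2])
  show rep: "\<And>t. t \<in> {0..2*pi} \<Longrightarrow> f t = f 0 + (LBINT s:{0..t}. g s)"
  proof -
    fix t :: real assume t: "t \<in> {0..2*pi}"
    have "f t = f 0 + (LBINT s=0..t. g s)" using H unfolding H1per_def by blast
    then show "f t = f 0 + (LBINT s:{0..t}. g s)" using t interval_integral_Icc[of 0 t g] by (simp add: zero_ereal_def)
  qed
  have "f (0 + 2*pi) = f 0" using H unfolding H1per_def by blast
  then show "f (2*pi) = f 0" by simp
  define h where "h x = indicator {0..2*pi} x * g x" for x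
  have hi: "integrable lborel h" using gi unfolding set_integrable_def h_def by simp
  have "continuous_on UNIV (\<lambda>b. LBINT x:{0..b}. h x)"
  proof (rule continuous_on_LBINT)
    fix b :: real
    show "set_integrable lborel {0..b} h"
      using integrable_real_mult_indicator[OF _ hi, of "{0..b}"] unfolding set_integrable_def
      by (simp add: mult.commute)
  qed
  then have c: "continuous_on {0..2*pi} (\<lambda>b. f 0 + (LBINT x:{0..b}. h x))"
    by (intro continuous_intros) (auto intro: continuous_on_subset)
  show "continuous_on {0..2*pi} f"
  proof (rule continuous_on_cong[THEN iffD1, OF refl _ c])
    fix t assume t: "t \<in> {0..2*pi}"
    have "(LBINT x:{0..t}. h x) = (LBINT x:{0..t}. g x)"
      by (rule set_lebesgue_integral_cong) (use t in \<open>auto simp: h_def\<close>)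
    then show "f 0 + (LBINT x:{0..t}. h x) = f t" using rep[OF t] by simp
  qed
qed



lemma integrable_prod_real:
  fixes f g :: "real \<Rightarrow> real"
  assumes f: "integrable lborel f" and g: "integrable lborel g"
  shows "integrable (lborel \<Otimes>\<^sub>M lborel) (\<lambda>(x,y). f x * g y)"
proof (rule lborel_pair.Fubini_integrable)
  have [measurable]: "f \<in> borel_measurable borel" "g \<in> borel_measurable borel"
    using f g by auto
  show "(\<lambda>(x, y). f x * g y) \<in> borel_measurable (lborel \<Otimes>\<^sub>M lborel)" by measurable
  have "integrable lborel (\<lambda>x. \<bar>f x\<bar> * (\<integral>y. \<bar>g y\<bar> \<partial>lborel))"
    using f by (intro integrable_mult_left) auto
  then show "integrable lborel (\<lambda>x. \<integral>y. norm (case (x, y) of (x, y) \<Rightarrow> f x * g y) \<partial>lborel)"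
    by (simp add: abs_mult)
  show "AE x in lborel. integrable lborel (\<lambda>y. case (x, y) of (x, y) \<Rightarrow> f x * g y)"
    using g by (intro AE_I2) auto
qed

lemma set_integrable_cont_mult:
  fixes g \<phi> :: "real \<Rightarrow> real"
  assumes g: "set_integrable lborel {a..b} g" and c: "continuous_on {a..b} \<phi>"
  shows "set_integrable lborel {a..b} (\<lambda>s. \<phi> s * g s)"
proof -
  obtain M where M: "\<And>s. s \<in> {a..b} \<Longrightarrow> \<bar>\<phi> s\<bar> \<le> M"
    using compact_imp_bounded[OF compact_continuous_image[OF c compact_Icc]]
    unfolding bounded_iff by fastforce
  have gi: "set_integrable lborel {a..b} (\<lambda>s. M * g s)"
    using g by simp
  have [measurable]: "(\<lambda>x. indicator {a..b} x *\<^sub>R g x) \<in> borel_measurable borel"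
    using borel_measurable_integrable[OF g[unfolded set_integrable_def]] by simp
  show ?thesis
  proof (rule set_integrable_bound[OF gi])
    show "set_borel_measurable lborel {a..b} (\<lambda>s. \<phi> s * g s)"
      unfolding set_borel_measurable_def
    proof -
      have [measurable]: "(\<lambda>x. indicator {a..b} x *\<^sub>R \<phi> x) \<in> borel_measurable borel"
        by (rule borel_measurable_continuous_on_indicator[OF _ c]) simp
      have "(\<lambda>x. (indicator {a..b} x *\<^sub>R \<phi> x) * (indicator {a..b} x *\<^sub>R g x)) \<in> borel_measurable borel"
        by measurable
      moreover have "(\<lambda>x. (indicator {a..b} x *\<^sub>R \<phi> x) * (indicator {a..b} x *\<^sub>R g x)) = (\<lambda>x. indicator {a..b} x *\<^sub>R (\<phi> x * g x))"
        by (rule ext) (simp add: indicator_def)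
      ultimately show "(\<lambda>x. indicator {a..b} x *\<^sub>R (\<phi> x * g x)) \<in> borel_measurable lborel"
        by simp
    qed
    show "AE x in lborel. x \<in> {a..b} \<longrightarrow> norm (\<phi> x * g x) \<le> norm (M * g x)"
    proof (intro AE_I2 impI)
      fix x assume "x \<in> {a..b}"
      then have "\<bar>\<phi> x\<bar> \<le> M" by (rule M)
      then have "\<bar>\<phi> x\<bar> * \<bar>g x\<bar> \<le> M * \<bar>g x\<bar>" by (intro mult_right_mono) auto
      also have "\<dots> \<le> \<bar>M\<bar> * \<bar>g x\<bar>" by (intro mult_right_mono) auto
      finally show "norm (\<phi> x * g x) \<le> norm (M * g x)" by (simp add: abs_mult)
    qed
  qed
qed

lemma ibp:
  fixes f g \<phi> \<phi>' :: "real \<Rightarrow> real"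
  assumes ab: "a \<le> b"
    and gm[measurable]: "g \<in> borel_measurable borel" and gi: "set_integrable lborel {a..b} g"
    and rep: "\<And>t. t \<in> {a..b} \<Longrightarrow> f t = f a + (LBINT s:{a..t}. g s)"
    and fc: "continuous_on {a..b} f"
    and d\<phi>: "\<And>t. (\<phi> has_real_derivative \<phi>' t) (at t)" and c\<phi>': "continuous_on UNIV \<phi>'"
  shows "(LBINT s:{a..b}. \<phi> s * g s) = \<phi> b * f b - \<phi> a * f a - (LBINT s:{a..b}. \<phi>' s * f s)"
proof -
  have \<phi>'m[measurable]: "\<phi>' \<in> borel_measurable borel"
    using c\<phi>' by (rule borel_measurable_continuous_onI)
  have c\<phi>: "continuous_on UNIV \<phi>"
    using d\<phi> by (meson DERIV_isCont continuous_at_imp_continuous_on)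
  have \<phi>m: "\<phi> \<in> borel_measurable borel"
    using c\<phi> by (rule borel_measurable_continuous_onI)
  have FTC: "(LBINT s:{r..b}. \<phi>' s) = \<phi> b - \<phi> r" if r: "r \<le> b" for r
  proof -
    have "(LBINT s=r..b. \<phi>' s) = \<phi> b - \<phi> r"
    proof (rule interval_integral_FTC_finite)
      show "continuous_on {min r b..max r b} \<phi>'" using c\<phi>' by (rule continuous_on_subset) auto
      fix x show "(\<phi> has_vector_derivative \<phi>' x) (at x within {min r b..max r b})"
        using d\<phi>[of x] by (simp add: has_real_derivative_iff_has_vector_derivative has_vector_derivative_at_within)
    qed
    then show ?thesis using interval_integral_Icc[OF r, of \<phi>'] by simp
  qed
  obtain M where M: "\<And>s. s \<in> {a..b} \<Longrightarrow> \<bar>\<phi>' s\<bar> \<le> M"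
    using compact_imp_bounded[OF compact_continuous_image[OF continuous_on_subset[OF c\<phi>' subset_UNIV] compact_Icc]]
    unfolding bounded_iff by fastforce
  define F where "F s r = indicator {a..b} s * indicator {a..b} r * (if r \<le> s then 1 else 0) * \<phi>' s * g r" for s r :: real
  have i1: "integrable lborel (\<lambda>s. indicator {a..b} s * M)"
    using borel_integrable_atLeastAtMost'[OF continuous_on_const[of "{a..b}" M]]
    unfolding set_integrable_def by simp
  have i2: "integrable lborel (\<lambda>r. indicator {a..b} r * \<bar>g r\<bar>)"
    using set_integrable_abs[OF gi] unfolding set_integrable_def by simp
  have bnd: "integrable (lborel \<Otimes>\<^sub>M lborel) (\<lambda>(s,r). (indicator {a..b} s * M) * (indicator {a..b} r * \<bar>g r\<bar>))"
    by (rule integrable_prod_real[OF i1 i2])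
  have Fm: "case_prod F \<in> borel_measurable (lborel \<Otimes>\<^sub>M lborel)"
    unfolding F_def by measurable
  have Fae: "AE x in lborel \<Otimes>\<^sub>M lborel. norm (case_prod F x) \<le> norm ((\<lambda>(s,r). (indicator {a..b} s * M) * (indicator {a..b} r * \<bar>g r\<bar>)) x)"
  proof (intro AE_I2)
    fix x :: "real \<times> real"
    obtain s r where x: "x = (s, r)" by (cases x)
    show "norm (case_prod F x) \<le> norm ((\<lambda>(s,r). (indicator {a..b} s * M) * (indicator {a..b} r * \<bar>g r\<bar>)) x)"
    proof (cases "s \<in> {a..b} \<and> r \<in> {a..b}")
      case True
      then have "\<bar>\<phi>' s\<bar> \<le> M" by (intro M) auto
      then have "\<bar>\<phi>' s\<bar> * \<bar>g r\<bar> \<le> M * \<bar>g r\<bar>" by (intro mult_right_mono) auto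
      moreover have "0 \<le> M" using \<open>\<bar>\<phi>' s\<bar> \<le> M\<close> by linarith
      ultimately show ?thesis using True unfolding x F_def by (auto simp: abs_mult)
    next
      case False then show ?thesis unfolding x F_def by (auto simp: indicator_def)
    qed
  qed
  have Fint: "integrable (lborel \<Otimes>\<^sub>M lborel) (case_prod F)"
    by (rule Bochner_Integration.integrable_bound[OF bnd Fm Fae])
  have inner1: "(\<integral>r. F s r \<partial>lborel) = indicator {a..b} s * (\<phi>' s * (f s - f a))" for s
  proof (cases "s \<in> {a..b}")
    case True
    have "(\<integral>r. F s r \<partial>lborel) = (\<integral>r. \<phi>' s * (indicator {a..s} r * g r) \<partial>lborel)"
      using True by (intro Bochner_Integration.integral_cong[OF refl]) (auto simp: F_def indicator_def)
    also have "\<dots> = \<phi>' s * (LBINT r:{a..s}. g r)"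
      by (simp add: set_lebesgue_integral_def)
    also have "\<dots> = \<phi>' s * (f s - f a)" using rep[OF True] by simp
    finally show ?thesis using True by simp
  next
    case False then show ?thesis by (simp add: F_def)
  qed
  have inner2: "(\<integral>s. F s r \<partial>lborel) = indicator {a..b} r * (g r * (\<phi> b - \<phi> r))" for r
  proof (cases "r \<in> {a..b}")
    case True
    have "(\<integral>s. F s r \<partial>lborel) = (\<integral>s. g r * (indicator {r..b} s * \<phi>' s) \<partial>lborel)"
      using True by (intro Bochner_Integration.integral_cong[OF refl]) (auto simp: F_def indicator_def)
    also have "\<dots> = g r * (LBINT s:{r..b}. \<phi>' s)"
      by (simp add: set_lebesgue_integral_def)
    also have "\<dots> = g r * (\<phi> b - \<phi> r)" using True FTC by simp
    finally show ?thesis using True by simp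
  next
    case False then show ?thesis by (simp add: F_def)
  qed
  have fub: "(LBINT r:{a..b}. g r * (\<phi> b - \<phi> r)) = (LBINT s:{a..b}. \<phi>' s * (f s - f a))"
    using lborel_pair.Fubini_integral[OF Fint] unfolding inner1 inner2
    by (simp add: set_lebesgue_integral_def)
  have i_\<phi>g: "set_integrable lborel {a..b} (\<lambda>s. \<phi> s * g s)"
    by (rule set_integrable_cont_mult[OF gi continuous_on_subset[OF c\<phi> subset_UNIV]])
  have i_g: "set_integrable lborel {a..b} (\<lambda>s. g s * \<phi> b)"
    using gi by simp
  have i_\<phi>'f: "set_integrable lborel {a..b} (\<lambda>s. \<phi>' s * f s)"
    by (intro borel_integrable_atLeastAtMost' continuous_intros fc continuous_on_subset[OF c\<phi>' subset_UNIV])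
  have i_\<phi>': "set_integrable lborel {a..b} (\<lambda>s. \<phi>' s * f a)"
    by (intro borel_integrable_atLeastAtMost' continuous_intros continuous_on_subset[OF c\<phi>' subset_UNIV])
  have "(LBINT r:{a..b}. g r * (\<phi> b - \<phi> r)) = (LBINT r:{a..b}. g r * \<phi> b - \<phi> r * g r)"
    by (simp add: algebra_simps)
  also have "\<dots> = (LBINT r:{a..b}. g r) * \<phi> b - (LBINT r:{a..b}. \<phi> r * g r)"
    using set_integral_diff(2)[OF i_g i_\<phi>g] by simp
  also have "(LBINT r:{a..b}. g r) = f b - f a" using rep[of b] ab by simp
  finally have L: "(LBINT r:{a..b}. g r * (\<phi> b - \<phi> r)) = (f b - f a) * \<phi> b - (LBINT r:{a..b}. \<phi> r * g r)" .
  have "(LBINT s:{a..b}. \<phi>' s * (f s - f a)) = (LBINT s:{a..b}. \<phi>' s * f s - \<phi>' s * f a)"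
    by (simp add: algebra_simps)
  also have "\<dots> = (LBINT s:{a..b}. \<phi>' s * f s) - (LBINT s:{a..b}. \<phi>' s) * f a"
    using set_integral_diff(2)[OF i_\<phi>'f i_\<phi>'] by simp
  also have "(LBINT s:{a..b}. \<phi>' s) = \<phi> b - \<phi> a" using FTC[OF ab] .
  finally have R: "(LBINT s:{a..b}. \<phi>' s * (f s - f a)) = (LBINT s:{a..b}. \<phi>' s * f s) - (\<phi> b - \<phi> a) * f a" .
  from fub L R show ?thesis by (simp add: algebra_simps)
qed



lemma lin4:
  fixes f1 f2 f3 f4 :: "real \<Rightarrow> real"
  assumes "set_integrable M A f1" "set_integrable M A f2" "set_integrable M A f3" "set_integrable M A f4"
  shows "(LINT s:A|M. f1 s - f2 s - c * f3 s - d * f4 s) = (LINT s:A|M. f1 s) - (LINT s:A|M. f2 s) - c * (LINT s:A|M. f3 s) - d * (LINT s:A|M. f4 s)"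
proof -
  have a: "set_integrable M A (\<lambda>s. c * f3 s)" "set_integrable M A (\<lambda>s. d * f4 s)" using assms by auto
  have b: "set_integrable M A (\<lambda>s. f1 s - f2 s)" using assms by auto
  have c: "set_integrable M A (\<lambda>s. f1 s - f2 s - c * f3 s)" using a b by auto
  show ?thesis
    using set_integral_diff(2)[OF c a(2)] set_integral_diff(2)[OF b a(1)] set_integral_diff(2)[OF assms(1,2)]
    by simp
qed

lemma rot_rep:
  fixes x dx y dy :: "real \<Rightarrow> real" and \<omega> t :: real
  assumes Hx: "H1per x dx" and Hy: "H1per y dy" and t: "t \<in> {0..2*pi}"
  shows "(cos (\<omega> * t) * x t - sin (\<omega> * t) * y t) - x 0 =
           (LBINT s:{0..t}. cos (\<omega> * s) * (dx s - \<omega> * y s) - sin (\<omega> * s) * (dy s + \<omega> * x s))"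
    and "(sin (\<omega> * t) * x t + cos (\<omega> * t) * y t) - y 0 =
           (LBINT s:{0..t}. sin (\<omega> * s) * (dx s - \<omega> * y s) + cos (\<omega> * s) * (dy s + \<omega> * x s))"
proof -
  note fx = H1per_facts[OF Hx] and fy = H1per_facts[OF Hy]
  have t0: "0 \<le> t" and sub: "{0..t} \<subseteq> {0..2*pi}" using t by auto
  have gix: "set_integrable lborel {0..t} dx" by (rule set_integrable_subset[OF fx(2) _ sub]) auto
  have giy: "set_integrable lborel {0..t} dy" by (rule set_integrable_subset[OF fy(2) _ sub]) auto
  have repx: "\<And>s. s \<in> {0..t} \<Longrightarrow> x s = x 0 + (LBINT r:{0..s}. dx r)" using sub by (intro fx(4)) auto
  have repy: "\<And>s. s \<in> {0..t} \<Longrightarrow> y s = y 0 + (LBINT r:{0..s}. dy r)" using sub by (intro fy(4)) auto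
  have cx: "continuous_on {0..t} x" using fx(5) sub by (rule continuous_on_subset)
  have cy: "continuous_on {0..t} y" using fy(5) sub by (rule continuous_on_subset)
  have dcos: "\<And>s. ((\<lambda>s. cos (\<omega> * s)) has_real_derivative (- \<omega> * sin (\<omega> * s))) (at s)"
    by (auto intro!: derivative_eq_intros)
  have dsin: "\<And>s. ((\<lambda>s. sin (\<omega> * s)) has_real_derivative (\<omega> * cos (\<omega> * s))) (at s)"
    by (auto intro!: derivative_eq_intros)
  have ccos: "continuous_on UNIV (\<lambda>s. - \<omega> * sin (\<omega> * s))" by (intro continuous_intros)
  have csin: "continuous_on UNIV (\<lambda>s. \<omega> * cos (\<omega> * s))" by (intro continuous_intros)
  have I1: "(LBINT s:{0..t}. cos (\<omega> * s) * dx s) = cos (\<omega> * t) * x t - cos (\<omega> * 0) * x 0 - (LBINT s:{0..t}. (- \<omega> * sin (\<omega> * s)) * x s)"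
    by (rule ibp[OF t0 fx(1) gix repx cx dcos ccos])
  have I2: "(LBINT s:{0..t}. sin (\<omega> * s) * dy s) = sin (\<omega> * t) * y t - sin (\<omega> * 0) * y 0 - (LBINT s:{0..t}. (\<omega> * cos (\<omega> * s)) * y s)"
    by (rule ibp[OF t0 fy(1) giy repy cy dsin csin])
  have I3: "(LBINT s:{0..t}. sin (\<omega> * s) * dx s) = sin (\<omega> * t) * x t - sin (\<omega> * 0) * x 0 - (LBINT s:{0..t}. (\<omega> * cos (\<omega> * s)) * x s)"
    by (rule ibp[OF t0 fx(1) gix repx cx dsin csin])
  have I4: "(LBINT s:{0..t}. cos (\<omega> * s) * dy s) = cos (\<omega> * t) * y t - cos (\<omega> * 0) * y 0 - (LBINT s:{0..t}. (- \<omega> * sin (\<omega> * s)) * y s)"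
    by (rule ibp[OF t0 fy(1) giy repy cy dcos ccos])
  have mc: "(\<lambda>s. cos (\<omega> * s)) \<in> borel_measurable borel" "(\<lambda>s. sin (\<omega> * s)) \<in> borel_measurable borel"
    by (intro borel_measurable_continuous_onI continuous_intros)+
  have j1: "set_integrable lborel {0..t} (\<lambda>s. cos (\<omega> * s) * dx s)"
    by (rule set_integrable_cont_mult[OF gix _]) (intro continuous_intros)
  have j2: "set_integrable lborel {0..t} (\<lambda>s. sin (\<omega> * s) * dy s)"
    by (rule set_integrable_cont_mult[OF giy _]) (intro continuous_intros)
  have j3: "set_integrable lborel {0..t} (\<lambda>s. sin (\<omega> * s) * dx s)"
    by (rule set_integrable_cont_mult[OF gix _]) (intro continuous_intros)
  have j4: "set_integrable lborel {0..t} (\<lambda>s. cos (\<omega> * s) * dy s)"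
    by (rule set_integrable_cont_mult[OF giy _]) (intro continuous_intros)
  have k1: "set_integrable lborel {0..t} (\<lambda>s. sin (\<omega> * s) * x s)"
    by (intro borel_integrable_atLeastAtMost' continuous_intros cx)
  have k2: "set_integrable lborel {0..t} (\<lambda>s. cos (\<omega> * s) * y s)"
    by (intro borel_integrable_atLeastAtMost' continuous_intros cy)
  have k3: "set_integrable lborel {0..t} (\<lambda>s. cos (\<omega> * s) * x s)"
    by (intro borel_integrable_atLeastAtMost' continuous_intros cx)
  have k4: "set_integrable lborel {0..t} (\<lambda>s. sin (\<omega> * s) * y s)"
    by (intro borel_integrable_atLeastAtMost' continuous_intros cy)
  have p1: "(LBINT s:{0..t}. (- \<omega> * sin (\<omega> * s)) * x s) = - \<omega> * (LBINT s:{0..t}. sin (\<omega> * s) * x s)"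
    by (simp only: mult.assoc set_integral_mult_right)
  have p2: "(LBINT s:{0..t}. (\<omega> * cos (\<omega> * s)) * y s) = \<omega> * (LBINT s:{0..t}. cos (\<omega> * s) * y s)"
    by (simp only: mult.assoc set_integral_mult_right)
  have p3: "(LBINT s:{0..t}. (\<omega> * cos (\<omega> * s)) * x s) = \<omega> * (LBINT s:{0..t}. cos (\<omega> * s) * x s)"
    by (simp only: mult.assoc set_integral_mult_right)
  have p4: "(LBINT s:{0..t}. (- \<omega> * sin (\<omega> * s)) * y s) = - \<omega> * (LBINT s:{0..t}. sin (\<omega> * s) * y s)"
    by (simp only: mult.assoc set_integral_mult_right)
  have e1: "(LBINT s:{0..t}. cos (\<omega> * s) * (dx s - \<omega> * y s) - sin (\<omega> * s) * (dy s + \<omega> * x s))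
      = (LBINT s:{0..t}. cos (\<omega> * s) * dx s - sin (\<omega> * s) * dy s - \<omega> * (sin (\<omega> * s) * x s) - \<omega> * (cos (\<omega> * s) * y s))"
    by (rule set_lebesgue_integral_cong) (auto simp: algebra_simps)
  have e2: "(LBINT s:{0..t}. sin (\<omega> * s) * (dx s - \<omega> * y s) + cos (\<omega> * s) * (dy s + \<omega> * x s))
      = (LBINT s:{0..t}. sin (\<omega> * s) * dx s - (- cos (\<omega> * s) * dy s) - (-\<omega>) * (cos (\<omega> * s) * x s) - \<omega> * (sin (\<omega> * s) * y s))"
    by (rule set_lebesgue_integral_cong) (auto simp: algebra_simps)
  have j4': "set_integrable lborel {0..t} (\<lambda>s. - cos (\<omega> * s) * dy s)"
    using set_integrable_mult_right[of "-1" lborel "{0..t}" "\<lambda>s. cos (\<omega> * s) * dy s"] j4 by simp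
  have m1: "(LBINT s:{0..t}. - cos (\<omega> * s) * dy s) = - (LBINT s:{0..t}. cos (\<omega> * s) * dy s)"
    using set_integral_mult_right[where a="-1" and M=lborel and A="{0..t}" and f="\<lambda>s. cos (\<omega> * s) * dy s"] by simp
  show "(cos (\<omega> * t) * x t - sin (\<omega> * t) * y t) - x 0 =
           (LBINT s:{0..t}. cos (\<omega> * s) * (dx s - \<omega> * y s) - sin (\<omega> * s) * (dy s + \<omega> * x s))"
    unfolding e1 lin4[OF j1 j2 k1 k2] I1 I2 p1 p2
    by (simp add: algebra_simps)
  show "(sin (\<omega> * t) * x t + cos (\<omega> * t) * y t) - y 0 =
           (LBINT s:{0..t}. sin (\<omega> * s) * (dx s - \<omega> * y s) + cos (\<omega> * s) * (dy s + \<omega> * x s))"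
    unfolding e2 lin4[OF j3 j4' k3 k4] m1 I3 I4 p3 p4
    by (simp add: algebra_simps)
qed



lemma alg_rot:
  fixes C S x0 y0 xt yt ct st P1 P2 Q1 Q2 \<theta> \<phi> :: real
  assumes "C = cos \<theta>" "S = sin \<theta>" "ct = cos \<phi>" "st = sin \<phi>"
    "P1 = (C*x0 - S*y0) - (ct*xt - st*yt)" "P2 = (S*x0 + C*y0) - (st*xt + ct*yt)"
    "Q1 = (ct*xt - st*yt) - x0" "Q2 = (st*xt + ct*yt) - y0"
  shows "(2 - 2*C) * (xt^2+yt^2) \<le> (sqrt(P1^2+P2^2) + sqrt(Q1^2+Q2^2))^2"
proof -
  define l where "l = Complex C S"
  define w where "w = Complex (ct*xt - st*yt) (st*xt + ct*yt)"
  define w0 where "w0 = Complex x0 y0"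
  have CS: "C^2 + S^2 = 1" "ct^2 + st^2 = 1" using assms(1-4) by simp_all
  have Pc: "Complex P1 P2 = l*w0 - w" using assms(5,6) by (simp add: l_def w0_def w_def complex_eq_iff)
  have Qc: "Complex Q1 Q2 = w - w0" using assms(7,8) by (simp add: w_def w0_def complex_eq_iff)
  have key: "(l - 1) * w = Complex P1 P2 + l * Complex Q1 Q2"
    unfolding Pc Qc by (simp add: algebra_simps)
  have nl: "cmod l = 1" using CS by (simp add: l_def cmod_def)
  have "cmod ((l - 1) * w) \<le> cmod (Complex P1 P2) + cmod (l * Complex Q1 Q2)"
    unfolding key by (rule norm_triangle_ineq)
  also have "cmod (l * Complex Q1 Q2) = cmod (Complex Q1 Q2)" by (simp add: norm_mult nl)
  finally have tri: "cmod ((l - 1) * w) \<le> sqrt(P1^2+P2^2) + sqrt(Q1^2+Q2^2)" by (simp add: cmod_def)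
  have "(cmod ((l - 1) * w))^2 = (cmod (l - 1))^2 * (cmod w)^2" by (simp add: norm_mult power_mult_distrib)
  also have "(cmod (l - 1))^2 = (C - 1)^2 + S^2"
    by (simp add: l_def cmod_def)
  also have "\<dots> = 2 - 2*C"
    using CS by (simp add: power2_diff algebra_simps)
  also have "(cmod w)^2 = (ct^2 + st^2) * (xt^2+yt^2)"
    by (simp add: w_def cmod_def power2_diff power2_sum algebra_simps power_mult_distrib)
  finally have "(2 - 2*C) * (xt^2+yt^2) = (cmod ((l - 1) * w))^2" using CS by simp
  also have "\<dots> \<le> (sqrt(P1^2+P2^2) + sqrt(Q1^2+Q2^2))^2"
    using tri by (intro power_mono) auto
  finally show ?thesis .
qed



lemma vec_bound:
  fixes h1 h2 :: "real \<Rightarrow> real"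
  assumes i1: "integrable lborel h1" and i2: "integrable lborel h2"
  shows "integrable lborel (\<lambda>s. sqrt((h1 s)^2 + (h2 s)^2))"
    and "sqrt((\<integral>s. h1 s \<partial>lborel)^2 + (\<integral>s. h2 s \<partial>lborel)^2) \<le> (\<integral>s. sqrt((h1 s)^2 + (h2 s)^2) \<partial>lborel)"
proof -
  have [measurable]: "h1 \<in> borel_measurable borel" "h2 \<in> borel_measurable borel" using i1 i2 by auto
  have ia: "integrable lborel (\<lambda>s. \<bar>h1 s\<bar> + \<bar>h2 s\<bar>)" using i1 i2 by auto
  show isq: "integrable lborel (\<lambda>s. sqrt((h1 s)^2 + (h2 s)^2))"
    by (rule Bochner_Integration.integrable_bound[OF ia]) (auto intro!: AE_I2 simp: sqrt_sum_squares_le_sum_abs)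
  define P1 where "P1 = (\<integral>s. h1 s \<partial>lborel)"
  define P2 where "P2 = (\<integral>s. h2 s \<partial>lborel)"
  define N where "N = sqrt(P1^2+P2^2)"
  show "sqrt((\<integral>s. h1 s \<partial>lborel)^2 + (\<integral>s. h2 s \<partial>lborel)^2) \<le> (\<integral>s. sqrt((h1 s)^2 + (h2 s)^2) \<partial>lborel)"
  proof (cases "N = 0")
    case True
    then show ?thesis unfolding N_def P1_def P2_def[symmetric]
      by (simp add: P2_def)
  next
    case False
    then have Npos: "N > 0" unfolding N_def by (simp add: order_le_neq_trans)
    define \<alpha> where "\<alpha> = P1 / N"
    define \<beta> where "\<beta> = P2 / N"
    have N2: "N^2 = P1^2 + P2^2" unfolding N_def by simp
    have "\<alpha>^2 + \<beta>^2 = (P1^2 + P2^2) / N^2" by (simp add: \<alpha>_def \<beta>_def power_divide add_divide_distrib)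
    also have "\<dots> = 1" using Npos by (simp add: N2[symmetric])
    finally have ab1: "\<alpha>^2 + \<beta>^2 = 1" .
    have "\<alpha> * P1 + \<beta> * P2 = (P1^2 + P2^2) / N" by (simp add: \<alpha>_def \<beta>_def power2_eq_square add_divide_distrib)
    also have "\<dots> = N^2 / N" using N2 by simp
    also have "\<dots> = N" using Npos by (simp add: power2_eq_square)
    finally have "N = \<alpha> * P1 + \<beta> * P2" ..
    also have "\<dots> = (\<integral>s. \<alpha> * h1 s + \<beta> * h2 s \<partial>lborel)"
      using i1 i2 by (simp add: P1_def P2_def)
    also have "\<dots> \<le> (\<integral>s. sqrt((h1 s)^2 + (h2 s)^2) \<partial>lborel)"
    proof (rule integral_mono)
      show "integrable lborel (\<lambda>s. \<alpha> * h1 s + \<beta> * h2 s)" using i1 i2 by auto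
      show "integrable lborel (\<lambda>s. sqrt((h1 s)^2 + (h2 s)^2))" by (rule isq)
      fix s
      have "(\<alpha> * h1 s + \<beta> * h2 s)^2 + (\<alpha> * h2 s - \<beta> * h1 s)^2 = (\<alpha>^2+\<beta>^2) * ((h1 s)^2 + (h2 s)^2)"
        by algebra
      then have "(\<alpha> * h1 s + \<beta> * h2 s)^2 + (\<alpha> * h2 s - \<beta> * h1 s)^2 = (h1 s)^2 + (h2 s)^2"
        using ab1 by simp
      moreover have "0 \<le> (\<alpha> * h2 s - \<beta> * h1 s)^2" by simp
      ultimately have "(\<alpha> * h1 s + \<beta> * h2 s)^2 \<le> (h1 s)^2 + (h2 s)^2"
        by linarith
      then show "\<alpha> * h1 s + \<beta> * h2 s \<le> sqrt((h1 s)^2 + (h2 s)^2)" by (rule real_le_rsqrt)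
    qed
    finally show ?thesis unfolding N_def P1_def P2_def .
  qed
qed

lemma cauchy_schwarz_Icc:
  fixes h :: "real \<Rightarrow> real"
  assumes ab: "a < b" and i1: "set_integrable lborel {a..b} h" and i2: "set_integrable lborel {a..b} (\<lambda>s. (h s)^2)"
  shows "(LBINT s:{a..b}. h s)^2 \<le> (b - a) * (LBINT s:{a..b}. (h s)^2)"
proof -
  define I where "I = (LBINT s:{a..b}. h s)"
  define J where "J = (LBINT s:{a..b}. (h s)^2)"
  define m where "m = I / (b - a)"
  have ic: "set_integrable lborel {a..b} (\<lambda>s. m^2)"
    by (rule borel_integrable_atLeastAtMost') (rule continuous_on_const)
  have i3: "set_integrable lborel {a..b} (\<lambda>s. 2 * m * h s)" using i1 by simp
  have "0 \<le> (LBINT s:{a..b}. (h s - m)^2)"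
    unfolding set_lebesgue_integral_def by (rule integral_nonneg_AE) (auto simp: indicator_def)
  also have "(LBINT s:{a..b}. (h s - m)^2) = (LBINT s:{a..b}. ((h s)^2 - 2 * m * h s) + m^2)"
    by (simp add: power2_diff algebra_simps)
  also have "\<dots> = (LBINT s:{a..b}. (h s)^2 - 2 * m * h s) + (LBINT s:{a..b}. m^2)"
    by (rule set_integral_add(2)[OF set_integral_diff(1)[OF i2 i3] ic])
  also have "(LBINT s:{a..b}. (h s)^2 - 2 * m * h s) = J - 2 * m * I"
    using set_integral_diff(2)[OF i2 i3] by (simp add: I_def J_def)
  also have "(LBINT s:{a..b}. m^2) = (b - a) * m^2"
    using ab by (simp add: set_integral_const)
  finally have "0 \<le> J - 2 * m * I + (b - a) * m^2" .
  moreover have "2 * m * I = 2 * (I^2 / (b - a))" by (simp add: m_def power2_eq_square)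
  moreover have "(b - a) * m^2 = I^2 / (b - a)"
  proof -
    have mI: "m * (b - a) = I" using ab by (simp add: m_def)
    have "(b - a) * m^2 = I * m" by (simp add: power2_eq_square mI[symmetric] algebra_simps)
    also have "\<dots> = I^2 / (b - a)" by (simp add: m_def power2_eq_square)
    finally show ?thesis .
  qed
  ultimately have "I^2 / (b - a) \<le> J" by linarith
  then have "I^2 \<le> J * (b - a)" using ab by (simp add: pos_divide_le_eq)
  then show ?thesis unfolding I_def J_def by (simp add: mult.commute)
qed




lemma sq_int:
  fixes g \<phi> :: "real \<Rightarrow> real"
  assumes gm: "g \<in> borel_measurable borel" and g2: "set_integrable lborel {a..b} (\<lambda>s. (g s)^2)"
    and c: "continuous_on {a..b} \<phi>"
  shows "set_integrable lborel {a..b} (\<lambda>s. (g s + \<phi> s)^2)"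
proof -
  have gi: "set_integrable lborel {a..b} g" by (rule set_int_of_sq[OF gm g2])
  have i2: "set_integrable lborel {a..b} (\<lambda>s. 2 * (\<phi> s * g s))"
    using set_integrable_cont_mult[OF gi c] by simp
  have i3: "set_integrable lborel {a..b} (\<lambda>s. (\<phi> s)^2)"
    by (intro borel_integrable_atLeastAtMost' continuous_intros c)
  have "set_integrable lborel {a..b} (\<lambda>s. (g s)^2 + (2 * (\<phi> s * g s) + (\<phi> s)^2))"
    by (intro set_integral_add(1) g2 i2 i3)
  moreover have "(\<lambda>s. (g s)^2 + (2 * (\<phi> s * g s) + (\<phi> s)^2)) = (\<lambda>s. (g s + \<phi> s)^2)"
    by (rule ext) (simp add: power2_sum algebra_simps)
  ultimately show ?thesis by simp
qed

lemma a_int: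
  assumes Hx: "H1per x dx" and Hy: "H1per y dy"
  shows "set_integrable lborel {0..2*pi} (\<lambda>s. (dx s - \<omega> * y s)^2)"
    and "set_integrable lborel {0..2*pi} (\<lambda>s. (dy s + \<omega> * x s)^2)"
    and "set_integrable lborel {0..2*pi} (\<lambda>s. dx s - \<omega> * y s)"
    and "set_integrable lborel {0..2*pi} (\<lambda>s. dy s + \<omega> * x s)"
proof -
  note fx = H1per_facts[OF Hx] and fy = H1per_facts[OF Hy]
  have e1: "(\<lambda>s. (dx s - \<omega> * y s)^2) = (\<lambda>s. (dx s + (- \<omega> * y s))^2)" by simp
  show "set_integrable lborel {0..2*pi} (\<lambda>s. (dx s - \<omega> * y s)^2)"
    unfolding e1 by (rule sq_int[OF fx(1) fx(3)]) (intro continuous_intros fy(5))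
  show "set_integrable lborel {0..2*pi} (\<lambda>s. (dy s + \<omega> * x s)^2)"
    by (rule sq_int[OF fy(1) fy(3)]) (intro continuous_intros fx(5))
  have cy: "set_integrable lborel {0..2*pi} (\<lambda>s. \<omega> * y s)"
    by (intro borel_integrable_atLeastAtMost' continuous_intros fy(5))
  have cx: "set_integrable lborel {0..2*pi} (\<lambda>s. \<omega> * x s)"
    by (intro borel_integrable_atLeastAtMost' continuous_intros fx(5))
  show "set_integrable lborel {0..2*pi} (\<lambda>s. dx s - \<omega> * y s)"
    by (rule set_integral_diff(1)[OF fx(2) cy])
  show "set_integrable lborel {0..2*pi} (\<lambda>s. dy s + \<omega> * x s)"
    by (rule set_integral_add(1)[OF fy(2) cx])
qed

lemma xy_point:
  assumes Hx: "H1per x dx" and Hy: "H1per y dy" and t: "t \<in> {0..2*pi}"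
  shows "(2 - 2*cos (\<omega> * (2*pi))) * ((x t)^2 + (y t)^2)
     \<le> 2*pi * (LBINT s:{0..2*pi}. (dx s - \<omega> * y s)^2 + (dy s + \<omega> * x s)^2)"
proof -
  note fx = H1per_facts[OF Hx] and fy = H1per_facts[OF Hy]
  note ai = a_int[OF Hx Hy, of \<omega>]
  define a1 where "a1 s = dx s - \<omega> * y s" for s
  define a2 where "a2 s = dy s + \<omega> * x s" for s
  define A1 where "A1 s = cos (\<omega> * s) * a1 s - sin (\<omega> * s) * a2 s" for s
  define A2 where "A2 s = sin (\<omega> * s) * a1 s + cos (\<omega> * s) * a2 s" for s
  define AA where "AA s = sqrt ((A1 s)^2 + (A2 s)^2)" for s
  have ia1: "set_integrable lborel {0..2*pi} a1" using ai(3) unfolding a1_def .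
  have ia2: "set_integrable lborel {0..2*pi} a2" using ai(4) unfolding a2_def .
  have iA1: "set_integrable lborel {0..2*pi} A1" unfolding A1_def
    by (intro set_integral_diff(1) set_integrable_cont_mult ia1 ia2 continuous_intros)
  have iA2: "set_integrable lborel {0..2*pi} A2" unfolding A2_def
    by (intro set_integral_add(1) set_integrable_cont_mult ia1 ia2 continuous_intros)
  have t0: "0 \<le> t" "t \<le> 2*pi" using t by auto
  have sub: "{0..t} \<subseteq> {0..2*pi}" using t by auto
  have iA1t: "set_integrable lborel {0..t} A1" by (rule set_integrable_subset[OF iA1 _ sub]) auto
  have iA2t: "set_integrable lborel {0..t} A2" by (rule set_integrable_subset[OF iA2 _ sub]) auto
  have tt: "2*pi \<in> {0..2*pi}" by simp
  have R1: "(cos (\<omega> * t) * x t - sin (\<omega> * t) * y t) - x 0 = (LBINT s:{0..t}. A1 s)"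
    using rot_rep(1)[OF Hx Hy t, of \<omega>] unfolding A1_def a1_def a2_def .
  have R2: "(sin (\<omega> * t) * x t + cos (\<omega> * t) * y t) - y 0 = (LBINT s:{0..t}. A2 s)"
    using rot_rep(2)[OF Hx Hy t, of \<omega>] unfolding A2_def a1_def a2_def .
  have R1': "(cos (\<omega> * (2*pi)) * x 0 - sin (\<omega> * (2*pi)) * y 0) - x 0 = (LBINT s:{0..2*pi}. A1 s)"
    using rot_rep(1)[OF Hx Hy tt, of \<omega>] fx(6) fy(6) unfolding A1_def a1_def a2_def by simp
  have R2': "(sin (\<omega> * (2*pi)) * x 0 + cos (\<omega> * (2*pi)) * y 0) - y 0 = (LBINT s:{0..2*pi}. A2 s)"
    using rot_rep(2)[OF Hx Hy tt, of \<omega>] fx(6) fy(6) unfolding A2_def a1_def a2_def by simp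
  define P1 where "P1 = (LBINT s:{0..2*pi}. A1 s) - (LBINT s:{0..t}. A1 s)"
  define P2 where "P2 = (LBINT s:{0..2*pi}. A2 s) - (LBINT s:{0..t}. A2 s)"
  define Q1 where "Q1 = (LBINT s:{0..t}. A1 s)"
  define Q2 where "Q2 = (LBINT s:{0..t}. A2 s)"
  have key1: "(2 - 2*cos (\<omega> * (2*pi))) * ((x t)^2 + (y t)^2) \<le> (sqrt(P1^2+P2^2) + sqrt(Q1^2+Q2^2))^2"
  proof (rule alg_rot[OF refl refl refl refl])
    show "P1 = (cos (\<omega> * (2*pi)) * x 0 - sin (\<omega> * (2*pi)) * y 0) - (cos (\<omega> * t) * x t - sin (\<omega> * t) * y t)"
      unfolding P1_def using R1 R1' by linarith
    show "P2 = (sin (\<omega> * (2*pi)) * x 0 + cos (\<omega> * (2*pi)) * y 0) - (sin (\<omega> * t) * x t + cos (\<omega> * t) * y t)"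
      unfolding P2_def using R2 R2' by linarith
    show "Q1 = (cos (\<omega> * t) * x t - sin (\<omega> * t) * y t) - x 0" unfolding Q1_def using R1 by simp
    show "Q2 = (sin (\<omega> * t) * x t + cos (\<omega> * t) * y t) - y 0" unfolding Q2_def using R2 by simp
  qed
  define c1 where "c1 s = (indicator {0..2*pi} s - indicator {0..t} s :: real)" for s :: real
  define c2 where "c2 s = (indicator {0..t} s :: real)" for s :: real
  have L1: "integrable lborel (\<lambda>s. indicator {0..2*pi} s * A1 s)" using iA1 unfolding set_integrable_def by simp
  have L2: "integrable lborel (\<lambda>s. indicator {0..2*pi} s * A2 s)" using iA2 unfolding set_integrable_def by simp
  have L1t: "integrable lborel (\<lambda>s. indicator {0..t} s * A1 s)" using iA1t unfolding set_integrable_def by simp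
  have L2t: "integrable lborel (\<lambda>s. indicator {0..t} s * A2 s)" using iA2t unfolding set_integrable_def by simp
  have h1: "integrable lborel (\<lambda>s. c1 s * A1 s)" unfolding c1_def left_diff_distrib using L1 L1t by auto
  have h2: "integrable lborel (\<lambda>s. c1 s * A2 s)" unfolding c1_def left_diff_distrib using L2 L2t by auto
  have g1: "integrable lborel (\<lambda>s. c2 s * A1 s)" unfolding c2_def using L1t .
  have g2: "integrable lborel (\<lambda>s. c2 s * A2 s)" unfolding c2_def using L2t .
  have P1e: "(\<integral>s. c1 s * A1 s \<partial>lborel) = P1"
    unfolding c1_def left_diff_distrib P1_def set_lebesgue_integral_def using L1 L1t by simp
  have P2e: "(\<integral>s. c1 s * A2 s \<partial>lborel) = P2"
    unfolding c1_def left_diff_distrib P2_def set_lebesgue_integral_def using L2 L2t by simp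
  have Q1e: "(\<integral>s. c2 s * A1 s \<partial>lborel) = Q1"
    unfolding c2_def Q1_def set_lebesgue_integral_def by simp
  have Q2e: "(\<integral>s. c2 s * A2 s \<partial>lborel) = Q2"
    unfolding c2_def Q2_def set_lebesgue_integral_def by simp
  have sq: "sqrt ((c * A1 s)^2 + (c * A2 s)^2) = \<bar>c\<bar> * AA s" for c s
  proof -
    have "(c * A1 s)^2 + (c * A2 s)^2 = c^2 * ((A1 s)^2 + (A2 s)^2)" by (simp add: power_mult_distrib algebra_simps)
    then show ?thesis by (simp add: AA_def real_sqrt_mult)
  qed
  note vP = vec_bound[OF h1 h2] and vQ = vec_bound[OF g1 g2]
  have iP: "integrable lborel (\<lambda>s. \<bar>c1 s\<bar> * AA s)" using vP(1) unfolding sq .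
  have iQ: "integrable lborel (\<lambda>s. \<bar>c2 s\<bar> * AA s)" using vQ(1) unfolding sq .
  have csum: "\<bar>c1 s\<bar> * AA s + \<bar>c2 s\<bar> * AA s = indicator {0..2*pi} s * AA s" for s
    using t0 unfolding c1_def c2_def by (auto simp: indicator_def)
  have AAe: "AA s = sqrt ((a1 s)^2 + (a2 s)^2)" for s
  proof -
    have "(A1 s)^2 + (A2 s)^2 = ((cos (\<omega> * s))^2 + (sin (\<omega> * s))^2) * ((a1 s)^2 + (a2 s)^2)"
      unfolding A1_def A2_def by algebra
    then show ?thesis unfolding AA_def by simp
  qed
  define L where "L = (LBINT s:{0..2*pi}. sqrt ((a1 s)^2 + (a2 s)^2))"
  have "sqrt(P1^2+P2^2) + sqrt(Q1^2+Q2^2) \<le> (\<integral>s. \<bar>c1 s\<bar> * AA s \<partial>lborel) + (\<integral>s. \<bar>c2 s\<bar> * AA s \<partial>lborel)"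
    using vP(2) vQ(2) unfolding sq P1e P2e Q1e Q2e by linarith
  also have "\<dots> = (\<integral>s. indicator {0..2*pi} s * AA s \<partial>lborel)"
    unfolding csum[symmetric] by (rule Bochner_Integration.integral_add[OF iP iQ, symmetric])
  also have "\<dots> = L" unfolding L_def set_lebesgue_integral_def AAe by simp
  finally have key2: "sqrt(P1^2+P2^2) + sqrt(Q1^2+Q2^2) \<le> L" .
  have iAA: "integrable lborel (\<lambda>s. indicator {0..2*pi} s * AA s)"
    using Bochner_Integration.integrable_add[OF iP iQ] unfolding csum .
  have isq: "set_integrable lborel {0..2*pi} (\<lambda>s. sqrt ((a1 s)^2 + (a2 s)^2))"
    using iAA unfolding set_integrable_def AAe by simp
  have isq2: "set_integrable lborel {0..2*pi} (\<lambda>s. (sqrt ((a1 s)^2 + (a2 s)^2))^2)"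
    using set_integral_add(1)[OF ai(1) ai(2)] unfolding a1_def a2_def by simp
  have CS: "L^2 \<le> (2*pi - 0) * (LBINT s:{0..2*pi}. (sqrt ((a1 s)^2 + (a2 s)^2))^2)"
    unfolding L_def by (rule cauchy_schwarz_Icc[OF _ isq isq2]) simp
  have "(2 - 2*cos (\<omega> * (2*pi))) * ((x t)^2 + (y t)^2) \<le> (sqrt(P1^2+P2^2) + sqrt(Q1^2+Q2^2))^2" by (rule key1)
  also have "\<dots> \<le> L^2" using key2 by (intro power_mono) auto
  also have "\<dots> \<le> 2*pi * (LBINT s:{0..2*pi}. (dx s - \<omega> * y s)^2 + (dy s + \<omega> * x s)^2)"
    using CS unfolding a1_def a2_def by simp
  finally show ?thesis .
qed



lemma z_point:
  assumes Hz: "H1per z dz" and mz: "(LBINT s=0..2*pi. z s) = 0" and t: "t \<in> {0..2*pi}"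
  shows "(z t)^2 \<le> 2*pi * (LBINT s:{0..2*pi}. (dz s)^2)"
proof -
  note fz = H1per_facts[OF Hz]
  have m0: "(LBINT s:{0..2*pi}. z s) = 0"
    using mz interval_integral_Icc[of 0 "2*pi" z] by (simp add: zero_ereal_def)
  define B where "B = (LBINT s:{0..2*pi}. \<bar>dz s\<bar>)"
  have Ldz: "integrable lborel (\<lambda>s. indicator {0..2*pi} s * dz s)"
    using fz(2) unfolding set_integrable_def by simp
  have Labs: "integrable lborel (\<lambda>s. indicator {0..2*pi} s * \<bar>dz s\<bar>)"
    using set_integrable_abs[OF fz(2)] unfolding set_integrable_def by simp
  have diff: "\<bar>z t - z s\<bar> \<le> B" if s: "s \<in> {0..2*pi}" for s
  proof -
    have Lt: "integrable lborel (\<lambda>r. indicator {0..t} r * dz r)"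
      using set_integrable_subset[OF fz(2), of "{0..t}"] t unfolding set_integrable_def by auto
    have Ls: "integrable lborel (\<lambda>r. indicator {0..s} r * dz r)"
      using set_integrable_subset[OF fz(2), of "{0..s}"] s unfolding set_integrable_def by auto
    have "z t - z s = (LBINT r:{0..t}. dz r) - (LBINT r:{0..s}. dz r)"
      using fz(4)[OF t] fz(4)[OF s] by simp
    also have "\<dots> = (\<integral>r. (indicator {0..t} r - indicator {0..s} r) * dz r \<partial>lborel)"
      unfolding set_lebesgue_integral_def left_diff_distrib using Lt Ls by simp
    finally have e: "z t - z s = (\<integral>r. (indicator {0..t} r - indicator {0..s} r) * dz r \<partial>lborel)" .
    have "\<bar>\<integral>r. (indicator {0..t} r - indicator {0..s} r) * dz r \<partial>lborel\<bar>
        \<le> (\<integral>r. norm ((indicator {0..t} r - indicator {0..s} r) * dz r) \<partial>lborel)"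
      using integral_norm_bound[of lborel "\<lambda>r. (indicator {0..t} r - indicator {0..s} r) * dz r"] by simp
    also have "\<dots> \<le> (\<integral>r. indicator {0..2*pi} r * \<bar>dz r\<bar> \<partial>lborel)"
    proof (rule integral_mono)
      show "integrable lborel (\<lambda>r. norm ((indicator {0..t} r - indicator {0..s} r) * dz r))"
        using Lt Ls by (simp add: left_diff_distrib)
      show "integrable lborel (\<lambda>r. indicator {0..2*pi} r * \<bar>dz r\<bar>)" by (rule Labs)
      fix r show "norm ((indicator {0..t} r - indicator {0..s} r) * dz r) \<le> indicator {0..2*pi} r * \<bar>dz r\<bar>"
        using s t by (auto simp: indicator_def abs_mult)
    qed
    also have "\<dots> = B" unfolding B_def set_lebesgue_integral_def by simp
    finally show ?thesis unfolding e .
  qed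
  have zc: "set_integrable lborel {0..2*pi} (\<lambda>s. z t - z s)"
    by (intro borel_integrable_atLeastAtMost' continuous_intros fz(5))
  have "(LBINT s:{0..2*pi}. z t - z s) = (LBINT s:{0..2*pi}. z t) - (LBINT s:{0..2*pi}. z s)"
    by (rule set_integral_diff(2)) (intro borel_integrable_atLeastAtMost' continuous_intros fz(5))+
  also have "\<dots> = 2*pi * z t" using m0 by (simp add: set_integral_const)
  finally have e2: "2*pi * z t = (LBINT s:{0..2*pi}. z t - z s)" by simp
  have "\<bar>LBINT s:{0..2*pi}. z t - z s\<bar> \<le> (LBINT s:{0..2*pi}. \<bar>z t - z s\<bar>)"
    using integral_norm_bound[of lborel "\<lambda>s. indicator {0..2*pi} s *\<^sub>R (z t - z s)"]
    unfolding set_lebesgue_integral_def by (simp add: abs_mult)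
  also have "\<dots> \<le> (LBINT s:{0..2*pi}. B)"
    by (rule set_integral_mono) (auto intro: set_integrable_abs zc borel_integrable_atLeastAtMost' continuous_on_const diff)
  also have "\<dots> = 2*pi * B" by (simp add: set_integral_const)
  finally have X: "\<bar>LBINT s:{0..2*pi}. z t - z s\<bar> \<le> 2*pi * B" .
  then have "\<bar>2*pi * z t\<bar> \<le> 2*pi * B" unfolding e2 .
  then have "2*pi * \<bar>z t\<bar> \<le> 2*pi * B" by (simp add: abs_mult)
  then have zB: "\<bar>z t\<bar> \<le> B" by simp
  have CS: "B^2 \<le> (2*pi - 0) * (LBINT s:{0..2*pi}. \<bar>dz s\<bar>^2)"
    unfolding B_def
    by (rule cauchy_schwarz_Icc) (auto intro: set_integrable_abs fz(2) fz(3))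
  have "(z t)^2 \<le> B^2" using zB by (metis abs_ge_zero power2_abs power_mono)
  also have "\<dots> \<le> 2*pi * (LBINT s:{0..2*pi}. (dz s)^2)" using CS by simp
  finally show ?thesis .
qed



lemma three: "{..<(3::nat)} = {0,1,2}" by auto

lemma delta_pos: "(\<omega>::real) \<notin> \<int> \<Longrightarrow> 0 < 2 - 2 * cos (\<omega> * (2*pi))"
proof -
  assume w: "\<omega> \<notin> \<int>"
  have "cos (\<omega> * (2*pi)) \<noteq> 1"
  proof
    assume "cos (\<omega> * (2*pi)) = 1"
    then obtain n :: int where "\<omega> * (2*pi) = n * (2*pi)" by (auto simp: cos_one_2pi_int)
    then have "\<omega> = n" by simp
    then show False using w by simp
  qed
  then show ?thesis using cos_le_one[of "\<omega> * (2*pi)"] by linarith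
qed

lemma sum_sq_le: "((u::real) + v)^2 \<le> 2 * u^2 + 2 * v^2"
  using zero_le_power2[of "u - v"] by (simp add: power2_diff power2_sum)

definition Cw :: "real \<Rightarrow> real" where
  "Cw \<omega> = 3 + 4*pi^2 + (1 + 2*\<omega>^2) * (4*pi^2) / (2 - 2 * cos (\<omega> * (2*pi)))"

lemma body_bound:
  fixes Q D :: "nat \<Rightarrow> real \<Rightarrow> real"
  assumes H: "\<And>k. k < 3 \<Longrightarrow> H1per (Q k) (D k)" and mz: "(LBINT t=0..2*pi. Q 2 t) = 0"
    and w: "\<omega> \<notin> \<int>"
  shows "(\<Sum>k<3. LBINT t=0..2*pi. (Q k t)^2 + (D k t)^2)
     \<le> Cw \<omega> * (LBINT t:{0..2*pi}. (D 0 t - \<omega> * Q 1 t)^2 + (D 1 t + \<omega> * Q 0 t)^2 + (D 2 t)^2)"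
proof -
  have H0: "H1per (Q 0) (D 0)" and H1: "H1per (Q 1) (D 1)" and H2: "H1per (Q 2) (D 2)" using H by auto
  note f0 = H1per_facts[OF H0] and f1 = H1per_facts[OF H1] and f2 = H1per_facts[OF H2]
  note ai = a_int[OF H0 H1, of \<omega>]
  define \<delta> where "\<delta> = 2 - 2 * cos (\<omega> * (2*pi))"
  have \<delta>: "0 < \<delta>" unfolding \<delta>_def by (rule delta_pos[OF w])
  define a1 where "a1 t = D 0 t - \<omega> * Q 1 t" for t
  define a2 where "a2 t = D 1 t + \<omega> * Q 0 t" for t
  define Ka where "Ka = (LBINT s:{0..2*pi}. (a1 s)^2 + (a2 s)^2)"
  define Kz where "Kz = (LBINT s:{0..2*pi}. (D 2 s)^2)"
  have ia: "set_integrable lborel {0..2*pi} (\<lambda>s. (a1 s)^2 + (a2 s)^2)"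
    unfolding a1_def a2_def by (rule set_integral_add(1)[OF ai(1) ai(2)])
  have Ka0: "0 \<le> Ka" unfolding Ka_def set_lebesgue_integral_def
    by (rule integral_nonneg_AE) (auto simp: indicator_def)
  have Kz0: "0 \<le> Kz" unfolding Kz_def set_lebesgue_integral_def
    by (rule integral_nonneg_AE) (auto simp: indicator_def)
  have pxy: "(Q 0 t)^2 + (Q 1 t)^2 \<le> 2*pi*Ka / \<delta>" if t: "t \<in> {0..2*pi}" for t
  proof -
    have "\<delta> * ((Q 0 t)^2 + (Q 1 t)^2) \<le> 2*pi*Ka"
      using xy_point[OF H0 H1 t, of \<omega>] unfolding \<delta>_def Ka_def a1_def a2_def .
    then show ?thesis using \<delta> by (simp add: field_simps)
  qed
  have pz: "(Q 2 t)^2 \<le> 2*pi*Kz" if t: "t \<in> {0..2*pi}" for t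
    using z_point[OF H2 mz t] unfolding Kz_def .
  define c where "c = (1 + 2*\<omega>^2) * (2*pi*Ka / \<delta>) + 2*pi*Kz"
  have point: "(\<Sum>k<3. (Q k t)^2 + (D k t)^2) \<le> 2 * ((a1 t)^2 + (a2 t)^2) + (D 2 t)^2 + c"
    if t: "t \<in> {0..2*pi}" for t
  proof -
    have d0: "(D 0 t)^2 \<le> 2 * (a1 t)^2 + 2 * \<omega>^2 * (Q 1 t)^2"
    proof -
      have "D 0 t = a1 t + \<omega> * Q 1 t" unfolding a1_def by simp
      then show ?thesis using sum_sq_le[of "a1 t" "\<omega> * Q 1 t"] by (simp add: power_mult_distrib)
    qed
    have d1: "(D 1 t)^2 \<le> 2 * (a2 t)^2 + 2 * \<omega>^2 * (Q 0 t)^2"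
    proof -
      have "D 1 t = a2 t + (- \<omega> * Q 0 t)" unfolding a2_def by simp
      then show ?thesis using sum_sq_le[of "a2 t" "- \<omega> * Q 0 t"] by (simp add: power_mult_distrib)
    qed
    have w2: "0 \<le> \<omega>^2" by simp
    have "2 * \<omega>^2 * ((Q 0 t)^2 + (Q 1 t)^2) \<le> 2 * \<omega>^2 * (2*pi*Ka / \<delta>)"
      using pxy[OF t] w2 by (intro mult_left_mono) auto
    then show ?thesis using d0 d1 pxy[OF t] pz[OF t]
      unfolding three c_def by (simp add: algebra_simps)
  qed
  have iG: "set_integrable lborel {0..2*pi} (\<lambda>t. (Q k t)^2 + (D k t)^2)" if k: "k < 3" for k
  proof -
    note fk = H1per_facts[OF H[OF k]]
    show ?thesis
      by (intro set_integral_add(1) fk(3) borel_integrable_atLeastAtMost' continuous_intros fk(5))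
  qed
  have iG0: "set_integrable lborel {0..2*pi} (\<lambda>t. (Q 0 t)^2 + (D 0 t)^2)" by (rule iG) simp
  have iG1: "set_integrable lborel {0..2*pi} (\<lambda>t. (Q 1 t)^2 + (D 1 t)^2)" by (rule iG) simp
  have iG2: "set_integrable lborel {0..2*pi} (\<lambda>t. (Q 2 t)^2 + (D 2 t)^2)" by (rule iG) simp
  have iF: "set_integrable lborel {0..2*pi} (\<lambda>t. ((Q 0 t)^2 + (D 0 t)^2) + ((Q 1 t)^2 + (D 1 t)^2) + ((Q 2 t)^2 + (D 2 t)^2))"
    by (intro set_integral_add(1) iG0 iG1 iG2)
  have LHS: "(\<Sum>k<3. LBINT t=0..2*pi. (Q k t)^2 + (D k t)^2)
      = (LBINT t:{0..2*pi}. ((Q 0 t)^2 + (D 0 t)^2) + ((Q 1 t)^2 + (D 1 t)^2) + ((Q 2 t)^2 + (D 2 t)^2))"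
  proof -
    have e: "(LBINT t=0..2*pi. (Q k t)^2 + (D k t)^2) = (LBINT t:{0..2*pi}. (Q k t)^2 + (D k t)^2)" for k
      using interval_integral_Icc[of 0 "2*pi" "\<lambda>t. (Q k t)^2 + (D k t)^2"] by (simp add: zero_ereal_def)
    show ?thesis unfolding three e
      using set_integral_add(2)[OF set_integral_add(1)[OF iG0 iG1] iG2] set_integral_add(2)[OF iG0 iG1]
      by simp
  qed
  have iD2: "set_integrable lborel {0..2*pi} (\<lambda>s. (D 2 s)^2)" by (rule f2(3))
  have ic: "set_integrable lborel {0..2*pi} (\<lambda>s. c)"
    by (rule borel_integrable_atLeastAtMost') (rule continuous_on_const)
  have i2a: "set_integrable lborel {0..2*pi} (\<lambda>s. 2 * ((a1 s)^2 + (a2 s)^2))"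
    by (rule set_integrable_mult_right, rule ia)
  have iR: "set_integrable lborel {0..2*pi} (\<lambda>s. 2 * ((a1 s)^2 + (a2 s)^2) + (D 2 s)^2 + c)"
    by (intro set_integral_add(1) i2a iD2 ic)
  have "(LBINT t:{0..2*pi}. ((Q 0 t)^2 + (D 0 t)^2) + ((Q 1 t)^2 + (D 1 t)^2) + ((Q 2 t)^2 + (D 2 t)^2))
      \<le> (LBINT s:{0..2*pi}. 2 * ((a1 s)^2 + (a2 s)^2) + (D 2 s)^2 + c)"
  proof (rule set_integral_mono[OF iF iR])
    fix t assume t: "t \<in> {0..2*pi}"
    show "((Q 0 t)^2 + (D 0 t)^2) + ((Q 1 t)^2 + (D 1 t)^2) + ((Q 2 t)^2 + (D 2 t)^2)
        \<le> 2 * ((a1 t)^2 + (a2 t)^2) + (D 2 t)^2 + c"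
      using point[OF t] unfolding three by (simp add: add.assoc)
  qed
  also have "(LBINT s:{0..2*pi}. 2 * ((a1 s)^2 + (a2 s)^2) + (D 2 s)^2 + c) = 2 * Ka + Kz + 2*pi*c"
  proof -
    have e1: "(LBINT s:{0..2*pi}. 2 * ((a1 s)^2 + (a2 s)^2) + (D 2 s)^2 + c)
        = (LBINT s:{0..2*pi}. 2 * ((a1 s)^2 + (a2 s)^2) + (D 2 s)^2) + (LBINT s:{0..2*pi}. c)"
      by (rule set_integral_add(2)[OF set_integral_add(1)[OF i2a iD2] ic])
    have e2: "(LBINT s:{0..2*pi}. 2 * ((a1 s)^2 + (a2 s)^2) + (D 2 s)^2)
        = (LBINT s:{0..2*pi}. 2 * ((a1 s)^2 + (a2 s)^2)) + Kz"
      unfolding Kz_def by (rule set_integral_add(2)[OF i2a iD2])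
    have e3: "(LBINT s:{0..2*pi}. 2 * ((a1 s)^2 + (a2 s)^2)) = 2 * Ka"
      unfolding Ka_def by (rule set_integral_mult_right)
    have e4: "(LBINT s:{0..2*pi}. c) = 2*pi*c" by (simp add: set_integral_const)
    show ?thesis unfolding e1 e2 e3 e4 ..
  qed
  also have "\<dots> \<le> Cw \<omega> * (Ka + Kz)"
  proof -
    define r where "r = (1 + 2*\<omega>^2) * (4*pi^2) / \<delta>"
    have q: "0 \<le> r" using \<delta> unfolding r_def by simp
    have "2*pi*c = r * Ka + 4*pi^2 * Kz"
      unfolding c_def r_def using \<delta> by (simp add: field_simps power2_eq_square)
    then have "2 * Ka + Kz + 2*pi*c = (2 + r) * Ka + (1 + 4*pi^2) * Kz"
      by (simp add: algebra_simps)
    moreover have "Cw \<omega> = 3 + 4*pi^2 + r" unfolding Cw_def r_def \<delta>_def ..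
    then have "Cw \<omega> * (Ka + Kz) = ((2 + r) * Ka + (1 + 4*pi^2) * Kz)
        + ((1 + 4*pi^2) * Ka + (2 + r) * Kz)"
      by (simp add: algebra_simps)
    moreover have "0 \<le> (1 + 4*pi^2) * Ka + (2 + r) * Kz"
      using Ka0 Kz0 q by (intro add_nonneg_nonneg mult_nonneg_nonneg) auto
    ultimately show ?thesis by linarith
  qed
  also have "Ka + Kz = (LBINT t:{0..2*pi}. (D 0 t - \<omega> * Q 1 t)^2 + (D 1 t + \<omega> * Q 0 t)^2 + (D 2 t)^2)"
    using set_integral_add(2)[OF ia iD2] unfolding Ka_def Kz_def a1_def a2_def by simp
  finally show ?thesis unfolding LHS .
qed



lemma kin_eq:
  "kinetic \<omega> N q dq t = (1/2) * (\<Sum>i<N. (dq i 0 t - \<omega> * q i 1 t)^2 + (dq i 1 t + \<omega> * q i 0 t)^2 + (dq i 2 t)^2)"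
proof -
  have "cmod (Complex a b + \<i> * complex_of_real w * Complex c d) ^ 2 = (a - w * d)^2 + (b + w * c)^2" for a b c d w
    by (simp add: cmod_def)
  then show ?thesis unfolding kinetic_def by simp
qed

lemma kin_int:
  assumes L: "in_Lambda N q dq"
  shows "integrable lborel (\<lambda>t. kinetic \<omega> N q dq t * indicator {0..2*pi} t)"
    and "(\<integral>t. kinetic \<omega> N q dq t * indicator {0..2*pi} t \<partial>lborel)
       = (1/2) * (\<Sum>i<N. LBINT t:{0..2*pi}. (dq i 0 t - \<omega> * q i 1 t)^2 + (dq i 1 t + \<omega> * q i 0 t)^2 + (dq i 2 t)^2)"
proof -
  define k where "k i t = (dq i 0 t - \<omega> * q i 1 t)^2 + (dq i 1 t + \<omega> * q i 0 t)^2 + (dq i 2 t)^2" for i t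
  have ik: "integrable lborel (\<lambda>t. indicator {0..2*pi} t * k i t)" if i: "i < N" for i
  proof -
    have H0: "H1per (q i 0) (dq i 0)" and H1: "H1per (q i 1) (dq i 1)" and H2: "H1per (q i 2) (dq i 2)"
      using L i unfolding in_Lambda_def by auto
    note ai = a_int[OF H0 H1, of \<omega>]
    have "set_integrable lborel {0..2*pi} (k i)"
      unfolding k_def by (intro set_integral_add(1) ai(1) ai(2) H1per_facts(3)[OF H2])
    then show ?thesis unfolding set_integrable_def by simp
  qed
  have eq: "(\<lambda>t. kinetic \<omega> N q dq t * indicator {0..2*pi} t) = (\<lambda>t. (1/2) * (\<Sum>i<N. indicator {0..2*pi} t * k i t))"
    by (rule ext) (simp add: kin_eq k_def sum_distrib_left algebra_simps)
  have isum: "integrable lborel (\<lambda>t. \<Sum>i<N. indicator {0..2*pi} t * k i t)"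
    by (rule Bochner_Integration.integrable_sum) (use ik in auto)
  show "integrable lborel (\<lambda>t. kinetic \<omega> N q dq t * indicator {0..2*pi} t)"
    unfolding eq using isum by simp
  have "(\<integral>t. kinetic \<omega> N q dq t * indicator {0..2*pi} t \<partial>lborel) = (1/2) * (\<integral>t. (\<Sum>i<N. indicator {0..2*pi} t * k i t) \<partial>lborel)"
    unfolding eq by simp
  also have "(\<integral>t. (\<Sum>i<N. indicator {0..2*pi} t * k i t) \<partial>lborel) = (\<Sum>i<N. \<integral>t. indicator {0..2*pi} t * k i t \<partial>lborel)"
    by (rule Bochner_Integration.integral_sum) (use ik in auto)
  finally show "(\<integral>t. kinetic \<omega> N q dq t * indicator {0..2*pi} t \<partial>lborel)
       = (1/2) * (\<Sum>i<N. LBINT t:{0..2*pi}. (dq i 0 t - \<omega> * q i 1 t)^2 + (dq i 1 t + \<omega> * q i 0 t)^2 + (dq i 2 t)^2)"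
    unfolding set_lebesgue_integral_def k_def by simp
qed

lemma action_ge:
  assumes L: "in_Lambda N q dq"
  shows "ennreal ((1/2) * (\<Sum>i<N. LBINT t:{0..2*pi}. (dq i 0 t - \<omega> * q i 1 t)^2 + (dq i 1 t + \<omega> * q i 0 t)^2 + (dq i 2 t)^2))
     \<le> action \<omega> N q dq (2*pi)"
proof -
  note ki = kin_int[OF L, of \<omega>]
  have kpos: "0 \<le> kinetic \<omega> N q dq t" for t
    unfolding kin_eq by (intro mult_nonneg_nonneg sum_nonneg add_nonneg_nonneg) auto
  have "ennreal ((1/2) * (\<Sum>i<N. LBINT t:{0..2*pi}. (dq i 0 t - \<omega> * q i 1 t)^2 + (dq i 1 t + \<omega> * q i 0 t)^2 + (dq i 2 t)^2))
      = (\<integral>\<^sup>+ t. ennreal (kinetic \<omega> N q dq t * indicator {0..2*pi} t) \<partial>lborel)"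
    unfolding ki(2)[symmetric] by (rule nn_integral_eq_integral[symmetric]) (use ki(1) kpos in auto)
  also have "\<dots> \<le> action \<omega> N q dq (2*pi)"
    unfolding action_def
    by (rule nn_integral_mono) (auto simp: indicator_def)
  finally show ?thesis .
qed



theorem lemma5p1:
  fixes N :: nat and \<omega> :: real
    and q dq :: "nat \<Rightarrow> nat \<Rightarrow> nat \<Rightarrow> real \<Rightarrow> real"
  assumes "2 \<le> N"
    and "\<omega> \<notin> \<int>"
    and "\<And>n. in_Lambda N (q n) (dq n)"
    and "\<And>n i. i < N \<Longrightarrow> (LBINT t=0..2*pi. q n i 2 t) = 0"
    and "filterlim (\<lambda>n. H1norm N (q n) (dq n)) at_top sequentially"
  shows "((\<lambda>n. action \<omega> N (q n) (dq n) (2*pi)) \<longlongrightarrow> top) sequentially"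
proof -
  note w = assms(2) and L = assms(3) and mz = assms(4) and lim = assms(5)
  define S where "S n = (\<Sum>i<N. LBINT t:{0..2*pi}. (dq n i 0 t - \<omega> * q n i 1 t)^2 + (dq n i 1 t + \<omega> * q n i 0 t)^2 + (dq n i 2 t)^2)" for n
  define C where "C = Cw \<omega>"
  have Cpos: "0 < C"
  proof -
    have "0 \<le> (1 + 2*\<omega>^2) * (4*pi^2) / (2 - 2 * cos (\<omega> * (2*pi)))"
      using delta_pos[OF w] by simp
    then show ?thesis unfolding C_def Cw_def by (smt (verit) pi_gt3 zero_le_power2)
  qed
  have bound: "H1norm N (q n) (dq n) \<le> sqrt (C * S n)" for n
  proof -
    have "(\<Sum>i<N. \<Sum>k<3. (LBINT t=0..2*pi. (q n i k t)^2 + (dq n i k t)^2))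
        \<le> (\<Sum>i<N. C * (LBINT t:{0..2*pi}. (dq n i 0 t - \<omega> * q n i 1 t)^2 + (dq n i 1 t + \<omega> * q n i 0 t)^2 + (dq n i 2 t)^2))"
    proof (rule sum_mono)
      fix i assume "i \<in> {..<N}"
      then have i: "i < N" by simp
      show "(\<Sum>k<3. (LBINT t=0..2*pi. (q n i k t)^2 + (dq n i k t)^2))
        \<le> C * (LBINT t:{0..2*pi}. (dq n i 0 t - \<omega> * q n i 1 t)^2 + (dq n i 1 t + \<omega> * q n i 0 t)^2 + (dq n i 2 t)^2)"
        unfolding C_def
      proof (rule body_bound[OF _ _ w])
        fix k :: nat assume "k < 3"
        then show "H1per (q n i k) (dq n i k)" using L[of n] i unfolding in_Lambda_def by auto
      next
        show "(LBINT t=0..2*pi. q n i 2 t) = 0" by (rule mz[OF i])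
      qed
    qed
    also have "\<dots> = C * S n" unfolding S_def by (simp add: sum_distrib_left)
    finally show ?thesis unfolding H1norm_def by (rule real_sqrt_le_mono)
  qed
  have ev: "eventually (\<lambda>n. H1norm N (q n) (dq n) \<le> C * S n) sequentially"
  proof -
    have "eventually (\<lambda>n. 1 \<le> H1norm N (q n) (dq n)) sequentially"
      using lim unfolding filterlim_at_top by blast
    then show ?thesis
    proof eventually_elim
      fix n assume h1: "1 \<le> H1norm N (q n) (dq n)"
      define h where "h = H1norm N (q n) (dq n)"
      have hb: "h \<le> sqrt (C * S n)" unfolding h_def by (rule bound)
      then have "1 \<le> sqrt (C * S n)" using h1 unfolding h_def by linarith
      then have "1 \<le> C * S n" by simp
      then have y: "0 \<le> C * S n" by linarith
      have "h^2 \<le> (sqrt (C * S n))^2" using hb h1 unfolding h_def by (intro power_mono) auto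
      also have "\<dots> = C * S n" using y by simp
      finally have "h^2 \<le> C * S n" .
      moreover have "h \<le> h^2" using h1 unfolding h_def by (simp add: power2_eq_square)
      ultimately show "H1norm N (q n) (dq n) \<le> C * S n" unfolding h_def by linarith
    qed
  qed
  have l1: "filterlim (\<lambda>n. C * S n) at_top sequentially"
    by (rule filterlim_at_top_mono[OF lim ev])
  have l2: "filterlim (\<lambda>n. (1 / (2 * C)) * (C * S n)) at_top sequentially"
    by (rule filterlim_tendsto_pos_mult_at_top[OF tendsto_const _ l1]) (use Cpos in simp)
  have e: "(1 / (2 * C)) * (C * S n) = (1/2) * S n" for n using Cpos by simp
  have l3: "((\<lambda>n. ennreal ((1/2) * S n)) \<longlongrightarrow> top) sequentially"
    unfolding ennreal_tendsto_top_eq_at_top using l2 unfolding e .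
  have ge: "ennreal ((1/2) * S n) \<le> action \<omega> N (q n) (dq n) (2*pi)" for n
    unfolding S_def by (rule action_ge[OF L])
  show ?thesis
  proof (rule order_tendstoI)
    fix a :: ennreal assume a: "a < top"
    have "eventually (\<lambda>n. a < ennreal ((1/2) * S n)) sequentially"
      by (rule order_tendstoD(1)[OF l3 a])
    then show "eventually (\<lambda>n. a < action \<omega> N (q n) (dq n) (2*pi)) sequentially"
      by eventually_elim (use ge in \<open>blast intro: order.strict_trans2\<close>)
  next
    fix a :: ennreal assume "top < a"
    then have False by simp
    then show "eventually (\<lambda>n. action \<omega> N (q n) (dq n) (2*pi) < a) sequentially" ..
  qed
qed


end
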